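(* Let $p,l\in\mathbb{Z}_{\geq 0}$. For every $M\in\mathrm{Sym}_\infty^{p}$ with $\mathrm{rk}(M)\geq p2^pl$, the image of the orbit $G_\infty M$ under the projection $\mathrm{Sym}_\infty^{p}\to\mathrm{Sym}_l^{p}$ (taking upper-left $l\times l$ blocks) is Zariski dense in $\mathrm{Sym}_l^{p}$.
   Context: $\mathrm{Sym}_\infty$ is the space of symmetric complex $\mathbb{N}\times\mathbb{N}$ matrices, viewed as linear maps from finitely supported sequences $\mathbb{C}^\infty_{\mathrm{fin}}$ to all sequences $\mathbb{C}^\infty$; $\mathrm{Sym}_l$ is the space of symmetric complex $l\times l$ matrices. $G_\infty=\bigcup_k\mathrm{GL}_k(\mathbb{C})$ (embedded via $g\mapsto\mathrm{diag}(g,\mathrm{Id})$) acts on $\mathrm{Sym}_\infty^p$ by $g\cdot(M_1,\dots,M_p)=(gM_1g^T,\dots,gM_pg^T)$. Rank of a tuple: for $M=(M_1,\dots,M_s)\in\mathrm{Hom}(V,W)^s$, $\mathrm{rk}(M)$ is the infimum of $\mathrm{rk}(\sum_i\lambda_iM_i)\in\mathbb{Z}_{\ge0}\cup\{\infty\}$ over all nonzero $(\lambda_1,\dots,\lambda_s)\in\mathbb{C}^s$ (so $\mathrm{rk}(M)=\infty$ if $s=0$). *)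

theory Defs
  imports Complex_Main "HOL-Library.Extended_Nat" "HOL-Library.Function_Algebras"
begin

definition fscale :: "complex \<Rightarrow> (nat \<Rightarrow> complex) \<Rightarrow> (nat \<Rightarrow> complex)" where
  "fscale c f = (\<lambda>i. c * f i)"

definition mat_image :: "(nat \<Rightarrow> nat \<Rightarrow> complex) \<Rightarrow> (nat \<Rightarrow> complex) set" where
  "mat_image A = {(\<lambda>i. \<Sum>j\<in>{j. x j \<noteq> 0}. A i j * x j) | x. finite {j. x j \<noteq> 0}}"

definition mat_rank :: "(nat \<Rightarrow> nat \<Rightarrow> complex) \<Rightarrow> enat" where
  "mat_rank A = (if \<exists>B. finite B \<and> \<not> module.dependent fscale B
                        \<and> module.span fscale B = mat_image A
                 then enat (vector_space.dim fscale (mat_image A)) else \<infinity>)"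

text \<open>Rank of a p-tuple M(0),...,M(p-1): infimum over nonzero coefficient vectors
  (infimum of the empty set is infinity, case p = 0).\<close>
definition tuple_rank :: "nat \<Rightarrow> (nat \<Rightarrow> nat \<Rightarrow> nat \<Rightarrow> complex) \<Rightarrow> enat" where
  "tuple_rank p M = (INF lam \<in> {lam :: nat \<Rightarrow> complex. \<exists>k<p. lam k \<noteq> 0}.
                       mat_rank (\<lambda>i j. \<Sum>k<p. lam k * M k i j))"

definition sym_inf :: "(nat \<Rightarrow> nat \<Rightarrow> complex) set" where
  "sym_inf = {A. \<forall>i j. A i j = A j i}"

definition sym_inf_tuples :: "nat \<Rightarrow> (nat \<Rightarrow> nat \<Rightarrow> nat \<Rightarrow> complex) set" where
  "sym_inf_tuples p = {M. (\<forall>k<p. M k \<in> sym_inf) \<and> (\<forall>k\<ge>p. \<forall>i j. M k i j = 0)}"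

definition sym_l_tuples :: "nat \<Rightarrow> nat \<Rightarrow> (nat \<Rightarrow> nat \<Rightarrow> nat \<Rightarrow> complex) set" where
  "sym_l_tuples p l = {X. (\<forall>k i j. X k i j = X k j i)
                        \<and> (\<forall>k i j. \<not> (k < p \<and> i < l \<and> j < l) \<longrightarrow> X k i j = 0)}"

text \<open>G_infinity = union of GL_n(C) embedded via g |-> diag(g, Id).\<close>
definition embed_gl :: "nat \<Rightarrow> (nat \<Rightarrow> nat \<Rightarrow> complex) \<Rightarrow> (nat \<Rightarrow> nat \<Rightarrow> complex)" where
  "embed_gl n g = (\<lambda>i j. if i < n \<and> j < n then g i j else if i = j then 1 else 0)"

definition invertible_n :: "nat \<Rightarrow> (nat \<Rightarrow> nat \<Rightarrow> complex) \<Rightarrow> bool" where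
  "invertible_n n g \<longleftrightarrow> (\<exists>h. \<forall>i<n. \<forall>j<n.
      (\<Sum>k<n. g i k * h k j) = (if i = j then 1 else 0) \<and>
      (\<Sum>k<n. h i k * g k j) = (if i = j then 1 else 0))"

definition G_inf :: "(nat \<Rightarrow> nat \<Rightarrow> complex) set" where
  "G_inf = {embed_gl n g | n g. invertible_n n g}"

text \<open>g A g^T; g has finitely many nonzero entries in every row, so the sums are finite.\<close>
definition congr_act :: "(nat \<Rightarrow> nat \<Rightarrow> complex) \<Rightarrow> (nat \<Rightarrow> nat \<Rightarrow> complex) \<Rightarrow> (nat \<Rightarrow> nat \<Rightarrow> complex)" where
  "congr_act g A = (\<lambda>i j. \<Sum>a\<in>{a. g i a \<noteq> 0}. \<Sum>b\<in>{b. g j b \<noteq> 0}. g i a * A a b * g j b)"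

definition orbit :: "nat \<Rightarrow> (nat \<Rightarrow> nat \<Rightarrow> nat \<Rightarrow> complex) \<Rightarrow> (nat \<Rightarrow> nat \<Rightarrow> nat \<Rightarrow> complex) set" where
  "orbit p M = {(\<lambda>k. if k < p then congr_act g (M k) else (\<lambda>i j. 0)) | g. g \<in> G_inf}"

definition proj_block :: "nat \<Rightarrow> nat \<Rightarrow> (nat \<Rightarrow> nat \<Rightarrow> nat \<Rightarrow> complex) \<Rightarrow> (nat \<Rightarrow> nat \<Rightarrow> nat \<Rightarrow> complex)" where
  "proj_block p l M = (\<lambda>k i j. if k < p \<and> i < l \<and> j < l then M k i j else 0)"

inductive_set poly_fun :: "((nat \<Rightarrow> nat \<Rightarrow> nat \<Rightarrow> complex) \<Rightarrow> complex) set" where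
  const: "(\<lambda>X. c) \<in> poly_fun"
| coord: "(\<lambda>X. X k i j) \<in> poly_fun"
| add: "f \<in> poly_fun \<Longrightarrow> g \<in> poly_fun \<Longrightarrow> (\<lambda>X. f X + g X) \<in> poly_fun"
| mult: "f \<in> poly_fun \<Longrightarrow> g \<in> poly_fun \<Longrightarrow> (\<lambda>X. f X * g X) \<in> poly_fun"

definition zariski_dense_in :: "(nat \<Rightarrow> nat \<Rightarrow> nat \<Rightarrow> complex) set \<Rightarrow> (nat \<Rightarrow> nat \<Rightarrow> nat \<Rightarrow> complex) set \<Rightarrow> bool" where
  "zariski_dense_in S V \<longleftrightarrow> S \<subseteq> V \<and> (\<forall>f\<in>poly_fun. (\<forall>X\<in>S. f X = 0) \<longrightarrow> (\<forall>X\<in>V. f X = 0))"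

end

theory Submission
  imports Defs
begin


interpretation fs: vector_space fscale
  by unfold_locales (auto simp: fscale_def fun_eq_iff algebra_simps)

definition supp :: "(nat \<Rightarrow> complex) \<Rightarrow> nat set" where "supp x = {j. x j \<noteq> 0}"
abbreviation fin :: "(nat \<Rightarrow> complex) \<Rightarrow> bool" where "fin x \<equiv> finite (supp x)"

definition app :: "(nat \<Rightarrow> complex) \<Rightarrow> (nat \<Rightarrow> complex) \<Rightarrow> complex" where
  "app a x = (\<Sum>j\<in>supp x. a j * x j)"

definition bil :: "(nat \<Rightarrow> nat \<Rightarrow> complex) \<Rightarrow> (nat\<Rightarrow>complex) \<Rightarrow> (nat\<Rightarrow>complex) \<Rightarrow> complex" where
  "bil A x y = (\<Sum>i\<in>supp x. \<Sum>j\<in>supp y. x i * A i j * y j)"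

definition rowf :: "(nat \<Rightarrow> nat \<Rightarrow> complex) \<Rightarrow> (nat\<Rightarrow>complex) \<Rightarrow> (nat\<Rightarrow>complex)" where
  "rowf A u = (\<lambda>j. \<Sum>i\<in>supp u. u i * A i j)"

definition colv :: "(nat \<Rightarrow> nat \<Rightarrow> complex) \<Rightarrow> (nat\<Rightarrow>complex) \<Rightarrow> (nat\<Rightarrow>complex)" where
  "colv A x = (\<lambda>i. \<Sum>j\<in>supp x. A i j * x j)"

lemma sum_fun_apply: "(sum f A) i = (\<Sum>a\<in>A. f a i)"
  by (induction A rule: infinite_finite_induct) auto

lemma fscale_apply: "fscale c x i = c * x i" by (simp add: fscale_def)

lemma supp_add: "supp (x + y) \<subseteq> supp x \<union> supp y" by (auto simp: supp_def fscale_apply)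
lemma supp_diff: "supp (x - y) \<subseteq> supp x \<union> supp y" by (auto simp: supp_def fscale_apply)
lemma supp_scale: "supp (fscale c x) \<subseteq> supp x" by (auto simp: supp_def fscale_apply)
lemma supp_zero[simp]: "supp 0 = {}" by (auto simp: supp_def fscale_apply)
lemma fin_add[intro,simp]: "fin x \<Longrightarrow> fin y \<Longrightarrow> fin (x + y)" by (meson finite_Un finite_subset supp_add)
lemma fin_diff[intro,simp]: "fin x \<Longrightarrow> fin y \<Longrightarrow> fin (x - y)" by (meson finite_Un finite_subset supp_diff)
lemma fin_scale[intro,simp]: "fin x \<Longrightarrow> fin (fscale c x)" by (meson finite_subset supp_scale)
lemma supp_sum: "supp (sum f A) \<subseteq> (\<Union>a\<in>A. supp (f a))"
  by (induction A rule: infinite_finite_induct) (auto simp: supp_def)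
lemma fin_sum[intro]: "finite A \<Longrightarrow> (\<And>a. a \<in> A \<Longrightarrow> fin (f a)) \<Longrightarrow> fin (sum f A)"
  by (rule finite_subset[OF supp_sum]) auto
lemma fin_zero[intro]: "fin 0" by simp

lemma app_eq: "finite S \<Longrightarrow> supp x \<subseteq> S \<Longrightarrow> app a x = (\<Sum>j\<in>S. a j * x j)"
  unfolding app_def by (rule sum.mono_neutral_left) (auto simp: supp_def)

lemma bil_eq: "finite S \<Longrightarrow> supp x \<subseteq> S \<Longrightarrow> finite T \<Longrightarrow> supp y \<subseteq> T \<Longrightarrow>
   bil A x y = (\<Sum>i\<in>S. \<Sum>j\<in>T. x i * A i j * y j)"
proof -
  assume a: "finite S" "supp x \<subseteq> S" "finite T" "supp y \<subseteq> T"
  have "bil A x y = (\<Sum>i\<in>supp x. \<Sum>j\<in>T. x i * A i j * y j)"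
    unfolding bil_def
    by (intro sum.cong refl sum.mono_neutral_left) (use a in \<open>auto simp: supp_def\<close>)
  also have "\<dots> = (\<Sum>i\<in>S. \<Sum>j\<in>T. x i * A i j * y j)"
    by (rule sum.mono_neutral_left) (use a in \<open>auto simp: supp_def\<close>)
  finally show ?thesis .
qed

lemma app_add: "fin x \<Longrightarrow> fin y \<Longrightarrow> app a (x + y) = app a x + app a y"
  using supp_add[of x y]
  by (simp add: app_eq[of "supp x \<union> supp y"] sum.distrib algebra_simps)

lemma app_diff: "fin x \<Longrightarrow> fin y \<Longrightarrow> app a (x - y) = app a x - app a y"
  using supp_diff[of x y]
  by (simp add: app_eq[of "supp x \<union> supp y"] sum_subtractf algebra_simps)

lemma app_scale: "fin x \<Longrightarrow> app a (fscale c x) = c * app a x"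
  using supp_scale[of c x]
  by (simp add: app_eq[of "supp x"] sum_distrib_left algebra_simps fscale_apply)

lemma app_sum: "finite A \<Longrightarrow> (\<And>b. b \<in> A \<Longrightarrow> fin (f b)) \<Longrightarrow> app a (sum f A) = (\<Sum>b\<in>A. app a (f b))"
proof (induction A rule: finite_induct)
  case (insert b F)
  have "app a (sum f (insert b F)) = app a (f b + sum f F)" by (simp only: sum.insert[OF insert(1,2)])
  also have "\<dots> = app a (f b) + app a (sum f F)" by (rule app_add) (use insert in \<open>auto intro!: fin_sum\<close>)
  moreover have "app a (sum f F) = (\<Sum>b\<in>F. app a (f b))" using insert by auto
  ultimately show ?case by (simp only: sum.insert[OF insert(1,2)])
qed (simp add: app_def bil_def)

lemma app_zero[simp]: "app a 0 = 0" by (simp add: app_def)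

lemma app_fadd: "app (a + b) x = app a x + app b x"
  by (simp add: app_def sum.distrib algebra_simps)
lemma app_fdiff: "app (a - b) x = app a x - app b x"
  by (simp add: app_def sum_subtractf algebra_simps)
lemma app_fscale: "app (fscale c a) x = c * app a x"
  by (simp add: app_def sum_distrib_left algebra_simps fscale_apply)
lemma app_fsum: "app (sum f A) x = (\<Sum>b\<in>A. app (f b) x)"
  by (simp add: app_def sum_fun_apply sum_distrib_right) (rule sum.swap)

lemma bil_add1: "fin x \<Longrightarrow> fin x' \<Longrightarrow> fin y \<Longrightarrow> bil A (x + x') y = bil A x y + bil A x' y"
  using supp_add[of x x']
  by (simp add: bil_eq[of "supp x \<union> supp x'" _ "supp y"] sum.distrib algebra_simps)
lemma bil_add2: "fin x \<Longrightarrow> fin y \<Longrightarrow> fin y' \<Longrightarrow> bil A x (y + y') = bil A x y + bil A x y'"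
  using supp_add[of y y']
  by (simp add: bil_eq[of "supp x" _ "supp y \<union> supp y'"] sum.distrib algebra_simps)
lemma bil_diff1: "fin x \<Longrightarrow> fin x' \<Longrightarrow> fin y \<Longrightarrow> bil A (x - x') y = bil A x y - bil A x' y"
  using supp_diff[of x x']
  by (simp add: bil_eq[of "supp x \<union> supp x'" _ "supp y"] sum_subtractf algebra_simps)
lemma bil_diff2: "fin x \<Longrightarrow> fin y \<Longrightarrow> fin y' \<Longrightarrow> bil A x (y - y') = bil A x y - bil A x y'"
  using supp_diff[of y y']
  by (simp add: bil_eq[of "supp x" _ "supp y \<union> supp y'"] sum_subtractf algebra_simps)
lemma bil_scale1: "fin x \<Longrightarrow> fin y \<Longrightarrow> bil A (fscale c x) y = c * bil A x y"
  using supp_scale[of c x]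
  by (simp add: bil_eq[of "supp x" _ "supp y"] sum_distrib_left algebra_simps fscale_apply)
lemma bil_scale2: "fin x \<Longrightarrow> fin y \<Longrightarrow> bil A x (fscale c y) = c * bil A x y"
  using supp_scale[of c y]
  by (simp add: bil_eq[of "supp x" _ "supp y"] sum_distrib_left algebra_simps fscale_apply)
lemma bil_zero1[simp]: "bil A 0 y = 0" by (simp add: bil_def)
lemma bil_zero2[simp]: "bil A x 0 = 0" by (simp add: bil_def)
lemma bil_sum1: "finite B \<Longrightarrow> (\<And>b. b \<in> B \<Longrightarrow> fin (f b)) \<Longrightarrow> fin y \<Longrightarrow>
   bil A (sum f B) y = (\<Sum>b\<in>B. bil A (f b) y)"
proof (induction B rule: finite_induct)
  case (insert b F)
  have "bil A (sum f (insert b F)) y = bil A (f b + sum f F) y" by (simp only: sum.insert[OF insert(1,2)])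
  also have "\<dots> = bil A (f b) y + bil A (sum f F) y" by (rule bil_add1) (use insert in \<open>auto intro!: fin_sum\<close>)
  moreover have "bil A (sum f F) y = (\<Sum>b\<in>F. bil A (f b) y)" using insert by auto
  ultimately show ?case by (simp only: sum.insert[OF insert(1,2)])
qed (simp add: app_def bil_def)
lemma bil_sum2: "finite B \<Longrightarrow> (\<And>b. b \<in> B \<Longrightarrow> fin (f b)) \<Longrightarrow> fin x \<Longrightarrow>
   bil A x (sum f B) = (\<Sum>b\<in>B. bil A x (f b))"
proof (induction B rule: finite_induct)
  case (insert b F)
  have "bil A x (sum f (insert b F)) = bil A x (f b + sum f F)" by (simp only: sum.insert[OF insert(1,2)])
  also have "\<dots> = bil A x (f b) + bil A x (sum f F)" by (rule bil_add2) (use insert in \<open>auto intro!: fin_sum\<close>)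
  moreover have "bil A x (sum f F) = (\<Sum>b\<in>F. bil A x (f b))" using insert by auto
  ultimately show ?case by (simp only: sum.insert[OF insert(1,2)])
qed (simp add: app_def bil_def)

lemma bil_sym: "(\<And>i j. A i j = A j i) \<Longrightarrow> fin x \<Longrightarrow> fin y \<Longrightarrow> bil A x y = bil A y x"
  unfolding bil_def by (subst sum.swap) (auto intro!: sum.cong simp: algebra_simps)

lemma bil_comb: "bil (\<lambda>i j. \<Sum>k<p. mu k * M k i j) x y = (\<Sum>k<p. mu k * bil (M k) x y)"
proof -
  have "bil (\<lambda>i j. \<Sum>k<p. mu k * M k i j) x y =
     (\<Sum>i\<in>supp x. \<Sum>j\<in>supp y. \<Sum>k<p. mu k * (x i * M k i j * y j))"
    unfolding bil_def by (intro sum.cong refl) (simp add: sum_distrib_left sum_distrib_right mult_ac)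
  also have "\<dots> = (\<Sum>i\<in>supp x. \<Sum>k<p. \<Sum>j\<in>supp y. mu k * (x i * M k i j * y j))"
    by (intro sum.cong refl) (rule sum.swap)
  also have "\<dots> = (\<Sum>k<p. \<Sum>i\<in>supp x. \<Sum>j\<in>supp y. mu k * (x i * M k i j * y j))"
    by (rule sum.swap)
  also have "\<dots> = (\<Sum>k<p. mu k * bil (M k) x y)"
    unfolding bil_def by (simp add: sum_distrib_left)
  finally show ?thesis .
qed

lemma app_rowf: "fin u \<Longrightarrow> fin x \<Longrightarrow> app (rowf A u) x = bil A u x"
  unfolding app_def rowf_def bil_def by (simp add: sum_distrib_right) (subst sum.swap, simp)

lemma colv_rowf: "(\<And>i j. A i j = A j i) \<Longrightarrow> colv A x = rowf A x"
  unfolding colv_def rowf_def by (auto simp: fun_eq_iff algebra_simps)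

lemma rowf_comb: "rowf (\<lambda>i j. \<Sum>k<p. mu k * M k i j) u = (\<Sum>k<p. fscale (mu k) (rowf (M k) u))"
proof (rule ext)
  fix j
  have "rowf (\<lambda>i j. \<Sum>k<p. mu k * M k i j) u j = (\<Sum>i\<in>supp u. \<Sum>k<p. mu k * (u i * M k i j))"
    unfolding rowf_def by (intro sum.cong refl) (simp add: sum_distrib_left mult_ac)
  also have "\<dots> = (\<Sum>k<p. \<Sum>i\<in>supp u. mu k * (u i * M k i j))" by (rule sum.swap)
  also have "\<dots> = (\<Sum>k<p. fscale (mu k) (rowf (M k) u)) j"
    by (simp add: sum_fun_apply rowf_def sum_distrib_left fscale_apply)
  finally show "rowf (\<lambda>i j. \<Sum>k<p. mu k * M k i j) u j = (\<Sum>k<p. fscale (mu k) (rowf (M k) u)) j" .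
qed



definition unitv :: "nat \<Rightarrow> nat \<Rightarrow> complex" where "unitv j = (\<lambda>i. if i = j then 1 else 0)"
lemma supp_unitv[simp]: "supp (unitv j) = {j}" by (auto simp: supp_def unitv_def)
lemma unitv_self[simp]: "unitv j j = 1" by (simp add: unitv_def)
lemma app_unitv[simp]: "app a (unitv j) = a j" by (simp add: app_def)

lemma func_span:
  assumes "finite Fs"
    and "\<And>x. fin x \<Longrightarrow> (\<forall>f\<in>Fs. app f x = 0) \<Longrightarrow> app a x = 0"
  shows "a \<in> fs.span Fs"
  using assms
proof (induction Fs arbitrary: a rule: finite_induct)
  case empty
  have "a = 0"
  proof
    fix j show "a j = 0 j" using empty[of "unitv j"] by simp
  qed
  then show ?case by (metis fs.span_zero)
next
  case (insert f Fs)
  show ?case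
  proof (cases "\<exists>z. fin z \<and> (\<forall>g\<in>Fs. app g z = 0) \<and> app f z \<noteq> 0")
    case True
    then obtain z where z: "fin z" "\<forall>g\<in>Fs. app g z = 0" "app f z \<noteq> 0" by blast
    define c where "c = app a z / app f z"
    have "a - fscale c f \<in> fs.span Fs"
    proof (rule insert.IH)
      fix x assume x: "fin x" "\<forall>g\<in>Fs. app g x = 0"
      define x' where "x' = x - fscale (app f x / app f z) z"
      have fx': "fin x'" unfolding x'_def using x z by auto
      have "\<forall>g\<in>insert f Fs. app g x' = 0"
        unfolding x'_def using x z by (auto simp: app_diff app_scale)
      then have "app a x' = 0" using insert.prems fx' by blast
      then have "app a x = (app f x / app f z) * app a z"
        unfolding x'_def using x z by (simp add: app_diff app_scale)
      then show "app (a - fscale c f) x = 0"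
        using z by (simp add: app_fdiff app_fscale c_def field_simps)
    qed
    then have "a - fscale c f \<in> fs.span (insert f Fs)"
      by (meson fs.span_mono subset_insertI subsetD)
    moreover have "fscale c f \<in> fs.span (insert f Fs)"
      by (simp add: fs.span_base fs.span_scale)
    ultimately have "(a - fscale c f) + fscale c f \<in> fs.span (insert f Fs)"
      by (rule fs.span_add)
    then show ?thesis by simp
  next
    case False
    have "a \<in> fs.span Fs"
    proof (rule insert.IH)
      fix x assume x: "fin x" "\<forall>g\<in>Fs. app g x = 0"
      then have "app f x = 0" using False by blast
      then show "app a x = 0" using insert.prems x by auto
    qed
    then show ?thesis by (meson fs.span_mono subset_insertI subsetD)
  qed
qed

definition closedv :: "(nat \<Rightarrow> complex) set \<Rightarrow> bool" where
  "closedv H \<longleftrightarrow> (\<forall>x\<in>H. fin x) \<and> 0 \<in> H \<and> (\<forall>x\<in>H. \<forall>y\<in>H. x + y \<in> H)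
      \<and> (\<forall>x\<in>H. \<forall>c. fscale c x \<in> H)"

lemma closedv_diff: "closedv H \<Longrightarrow> x \<in> H \<Longrightarrow> y \<in> H \<Longrightarrow> x - y \<in> H"
proof -
  assume a: "closedv H" "x \<in> H" "y \<in> H"
  have "fscale (-1) y \<in> H" using a unfolding closedv_def by blast
  then have "- y \<in> H" by simp
  then show ?thesis using a unfolding closedv_def by (metis diff_conv_add_uminus)
qed

lemma closedv_sum: assumes "closedv H" "finite Z" "\<And>z. z \<in> Z \<Longrightarrow> f z \<in> H" shows "sum f Z \<in> H"
  using assms(2,3) by (induction Z rule: finite_induct) (use assms(1) in \<open>auto simp: closedv_def\<close>)

lemma closedv_ker:
  assumes "closedv H" shows "closedv {x\<in>H. app f x = 0}"
  using assms unfolding closedv_def by (auto simp: app_add app_scale)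

lemma elim_lemma:
  assumes "finite Fs" "closedv H0"
  shows "\<exists>Z. finite Z \<and> Z \<subseteq> H0 \<and> card Z \<le> card Fs \<and>
     (\<forall>x\<in>H0. \<exists>\<alpha>. x - (\<Sum>z\<in>Z. fscale (\<alpha> z) z) \<in> H0 \<and>
         (\<forall>f\<in>Fs. app f (x - (\<Sum>z\<in>Z. fscale (\<alpha> z) z)) = 0))"
  using assms
proof (induction Fs arbitrary: H0 rule: finite_induct)
  case empty
  show ?case by (rule exI[of _ "{}"]) simp
next
  case (insert f Fs)
  define H1 where "H1 = {x\<in>H0. app f x = 0}"
  have cH1: "closedv H1" unfolding H1_def by (rule closedv_ker[OF insert.prems])
  obtain Z1 where Z1: "finite Z1" "Z1 \<subseteq> H1" "card Z1 \<le> card Fs"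
    "\<forall>x\<in>H1. \<exists>\<alpha>. x - (\<Sum>z\<in>Z1. fscale (\<alpha> z) z) \<in> H1 \<and>
         (\<forall>f\<in>Fs. app f (x - (\<Sum>z\<in>Z1. fscale (\<alpha> z) z)) = 0)"
    using insert.IH[OF cH1] by blast
  have finH0: "\<And>x. x \<in> H0 \<Longrightarrow> fin x" using insert.prems by (auto simp: closedv_def)
  show ?case
  proof (cases "\<exists>z0\<in>H0. app f z0 \<noteq> 0")
    case True
    then obtain z0 where z0: "z0 \<in> H0" "app f z0 \<noteq> 0" by blast
    have z0n: "z0 \<notin> Z1" using Z1(2) z0 by (auto simp: H1_def)
    show ?thesis
    proof (intro exI[of _ "insert z0 Z1"] conjI ballI)
      show "finite (insert z0 Z1)" using Z1 by simp
      show "insert z0 Z1 \<subseteq> H0" using Z1(2) z0 by (auto simp: H1_def)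
      show "card (insert z0 Z1) \<le> card (insert f Fs)" using Z1 z0n insert by simp
    next
      fix x assume x: "x \<in> H0"
      define \<beta> where "\<beta> = app f x / app f z0"
      define x1 where "x1 = x - fscale \<beta> z0"
      have "x1 \<in> H0" unfolding x1_def using x z0 insert.prems
        by (metis closedv_def closedv_diff)
      moreover have "app f x1 = 0" unfolding x1_def \<beta>_def using z0 finH0[OF x] finH0[OF z0(1)]
        by (simp add: app_diff app_scale)
      ultimately have "x1 \<in> H1" by (simp add: H1_def)
      then obtain \<alpha> where \<alpha>: "x1 - (\<Sum>z\<in>Z1. fscale (\<alpha> z) z) \<in> H1"
        "\<forall>f\<in>Fs. app f (x1 - (\<Sum>z\<in>Z1. fscale (\<alpha> z) z)) = 0" using Z1(4) by blast
      have eq: "x - (\<Sum>z\<in>insert z0 Z1. fscale ((\<alpha>(z0 := \<beta>)) z) z) = x1 - (\<Sum>z\<in>Z1. fscale (\<alpha> z) z)"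
      proof -
        have "(\<Sum>z\<in>Z1. fscale ((\<alpha>(z0 := \<beta>)) z) z) = (\<Sum>z\<in>Z1. fscale (\<alpha> z) z)"
          using z0n by (intro sum.cong) auto
        then show ?thesis using Z1(1) z0n by (simp add: x1_def algebra_simps)
      qed
      show "\<exists>\<alpha>. x - (\<Sum>z\<in>insert z0 Z1. fscale (\<alpha> z) z) \<in> H0 \<and>
         (\<forall>f\<in>insert f Fs. app f (x - (\<Sum>z\<in>insert z0 Z1. fscale (\<alpha> z) z)) = 0)"
        by (rule exI[of _ "\<alpha>(z0 := \<beta>)"]) (use eq \<alpha> in \<open>auto simp: H1_def\<close>)
    qed
  next
    case False
    then have "H1 = H0" by (auto simp: H1_def)
    show ?thesis
    proof (intro exI[of _ Z1] conjI ballI)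
      show "finite Z1" "Z1 \<subseteq> H0" using Z1 \<open>H1 = H0\<close> by auto
      show "card Z1 \<le> card (insert f Fs)" using Z1 insert by simp
    next
      fix x assume "x \<in> H0"
      then show "\<exists>\<alpha>. x - (\<Sum>z\<in>Z1. fscale (\<alpha> z) z) \<in> H0 \<and>
         (\<forall>f\<in>insert f Fs. app f (x - (\<Sum>z\<in>Z1. fscale (\<alpha> z) z)) = 0)"
        using Z1(4) \<open>H1 = H0\<close> by (auto simp: H1_def)
    qed
  qed
qed

lemma polarize:
  assumes "closedv H" "\<And>i j. A i j = A j i" "\<And>x. x \<in> H \<Longrightarrow> bil A x x = 0"
    "x \<in> H" "y \<in> H"
  shows "bil A x y = 0"
proof -
  have f: "fin x" "fin y" using assms by (auto simp: closedv_def)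
  have "x + y \<in> H" using assms by (auto simp: closedv_def)
  then have "bil A (x + y) (x + y) = 0" using assms by auto
  then have "bil A x x + bil A x y + bil A y x + bil A y y = 0"
    using f by (simp add: bil_add1 bil_add2 algebra_simps)
  then have "2 * bil A x y = 0" using assms f bil_sym[of A x y] by simp
  then show ?thesis by simp
qed

lemma colv_app: "colv A x = (\<lambda>i. app (A i) x)"
  by (simp add: colv_def app_def fun_eq_iff)

lemma colv_add: "fin x \<Longrightarrow> fin y \<Longrightarrow> colv A (x + y) = colv A x + colv A y"
  by (simp add: colv_app app_add fun_eq_iff)
lemma colv_diff: "fin x \<Longrightarrow> fin y \<Longrightarrow> colv A (x - y) = colv A x - colv A y"
  by (simp add: colv_app app_diff fun_eq_iff)
lemma colv_scale: "fin x \<Longrightarrow> colv A (fscale c x) = fscale c (colv A x)"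
  by (simp add: colv_app app_scale fun_eq_iff fscale_apply)
lemma colv_sum: "finite Z \<Longrightarrow> (\<And>z. z \<in> Z \<Longrightarrow> fin (f z)) \<Longrightarrow> colv A (sum f Z) = (\<Sum>z\<in>Z. colv A (f z))"
  by (simp add: colv_app app_sum fun_eq_iff sum_fun_apply)
lemma app_colv: "fin x \<Longrightarrow> fin w \<Longrightarrow> app (colv A x) w = bil A w x"
  unfolding app_def colv_def bil_def by (simp add: sum_distrib_left mult_ac)

lemma mat_image_colv: "mat_image A = {colv A x | x. fin x}"
  by (simp add: mat_image_def colv_def supp_def)

lemma rank_bound:
  assumes "mat_image A \<subseteq> fs.span S" "finite S" "card S \<le> N"
  shows "mat_rank A \<le> enat N"
proof -
  let ?V = "mat_image A"
  have sub: "fs.subspace ?V"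
    unfolding fs.subspace_def mat_image_colv
  proof (intro conjI ballI allI)
    show "0 \<in> {colv A x |x. fin x}" by (rule CollectI, rule exI[of _ 0]) (simp add: colv_def fun_eq_iff)
  next
    fix a b assume "a \<in> {colv A x |x. fin x}" "b \<in> {colv A x |x. fin x}"
    then obtain x y where "a = colv A x" "fin x" "b = colv A y" "fin y" by auto
    then show "a + b \<in> {colv A x |x. fin x}" by (auto intro!: exI[of _ "x + y"] simp: colv_add)
  next
    fix c a assume "a \<in> {colv A x |x. fin x}"
    then obtain x where "a = colv A x" "fin x" by auto
    then show "fscale c a \<in> {colv A x |x. fin x}" by (auto intro!: exI[of _ "fscale c x"] simp: colv_scale)
  qed
  obtain B where B: "B \<subseteq> ?V" "fs.independent B" "?V \<subseteq> fs.span B"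
    by (rule fs.maximal_independent_subset)
  have "finite B \<and> card B \<le> card S"
    using fs.independent_span_bound[OF assms(2) B(2)] B(1) assms(1) by blast
  moreover have "fs.span B = ?V" using fs.span_subspace[OF B(1) B(3) sub] .
  moreover have "card B = fs.dim ?V" using fs.basis_card_eq_dim[OF B(1) B(3) B(2)] .
  ultimately show ?thesis unfolding mat_rank_def using B assms(3)
    by (auto intro!: exI[of _ B])
qed



locale symsetup =
  fixes p :: nat and M :: "nat \<Rightarrow> nat \<Rightarrow> nat \<Rightarrow> complex"
  assumes symM: "\<And>k i j. k < p \<Longrightarrow> M k i j = M k j i"
begin

definition qm :: "(nat \<Rightarrow> complex) \<Rightarrow> nat \<Rightarrow> nat \<Rightarrow> complex" where
  "qm mu = (\<lambda>i j. \<Sum>k<p. mu k * M k i j)"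

lemma qm_sym: "qm mu i j = qm mu j i"
  unfolding qm_def using symM by (intro sum.cong) auto

lemma bil_qm: "bil (qm mu) x y = (\<Sum>k<p. mu k * bil (M k) x y)"
  unfolding qm_def by (rule bil_comb)

lemma bilM_sym: "k < p \<Longrightarrow> fin x \<Longrightarrow> fin y \<Longrightarrow> bil (M k) x y = bil (M k) y x"
  by (rule bil_sym) (use symM in auto)

definition orth :: "(nat \<Rightarrow> complex) list \<Rightarrow> (nat \<Rightarrow> complex) set" where
  "orth U = {x. fin x \<and> (\<forall>u\<in>set U. \<forall>k<p. bil (M k) u x = 0)}"

definition valid :: "(nat \<Rightarrow> complex) list \<Rightarrow> bool" where
  "valid U \<longleftrightarrow> (\<forall>u\<in>set U. fin u) \<and>
     (\<forall>b<length U. \<forall>b'<length U. b \<noteq> b' \<longrightarrow> (\<forall>k<p. bil (M k) (U!b) (U!b') = 0)) \<and>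
     (\<forall>u\<in>set U. \<exists>k<p. bil (M k) u u \<noteq> 0)"

lemma closed_orth: "\<forall>u\<in>set U. fin u \<Longrightarrow> closedv (orth U)"
  unfolding closedv_def orth_def by (auto simp: bil_add2 bil_scale2)

lemma orth_fin: "x \<in> orth U \<Longrightarrow> fin x" by (simp add: orth_def)

lemma rank_orth:
  assumes val: "valid U" and van: "\<And>x. x \<in> orth U \<Longrightarrow> bil (qm mu) x x = 0"
  shows "mat_rank (qm mu) \<le> enat ((2*p-1) * length U)"
proof -
  define t where "t = length U"
  define A where "A = qm mu"
  have finU: "\<And>b. b < t \<Longrightarrow> fin (U!b)" using val by (auto simp: valid_def t_def)
  have "\<forall>b. \<exists>k. b < t \<longrightarrow> k < p \<and> bil (M k) (U!b) (U!b) \<noteq> 0"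
    using val by (auto simp: valid_def t_def)
  then obtain kk where kk: "\<And>b. b < t \<Longrightarrow> kk b < p \<and> bil (M (kk b)) (U!b) (U!b) \<noteq> 0"
    by metis
  have orthB: "\<And>b b' k. b < t \<Longrightarrow> b' < t \<Longrightarrow> b \<noteq> b' \<Longrightarrow> k < p \<Longrightarrow> bil (M k) (U!b) (U!b') = 0"
    using val by (auto simp: valid_def t_def)
  define FS where "FS = (\<lambda>(b,k). rowf (M k) (U!b)) ` ({..<t} \<times> {..<p})"
  define Fs' where "Fs' = (\<lambda>(b,k). rowf (M k) (U!b)) ` (SIGMA b:{..<t}. {..<p} - {kk b})"
  define H0 where "H0 = {y. fin y \<and> (\<forall>b<t. bil (M (kk b)) (U!b) y = 0)}"
  have cH0: "closedv H0" unfolding closedv_def H0_def using finU by (auto simp: bil_add2 bil_scale2)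
  have finFs': "finite Fs'" unfolding Fs'_def by auto
  have cardFs': "card Fs' \<le> t * (p - 1)"
  proof -
    have "card Fs' \<le> card (SIGMA b:{..<t}. {..<p} - {kk b})" unfolding Fs'_def by (rule card_image_le) auto
    also have "\<dots> = (\<Sum>b<t. card ({..<p} - {kk b}))" by (rule card_SigmaI) auto
    also have "\<dots> = (\<Sum>b<t. p - 1)" using kk by (intro sum.cong) auto
    finally show ?thesis by simp
  qed
  obtain Z where Z: "finite Z" "Z \<subseteq> H0" "card Z \<le> card Fs'"
     "\<forall>x\<in>H0. \<exists>\<alpha>. x - (\<Sum>z\<in>Z. fscale (\<alpha> z) z) \<in> H0 \<and>
         (\<forall>f\<in>Fs'. app f (x - (\<Sum>z\<in>Z. fscale (\<alpha> z) z)) = 0)"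
    using elim_lemma[OF finFs' cH0] by blast
  define S where "S = FS \<union> colv A ` Z"
  have finFS: "finite FS" unfolding FS_def by auto
  have cardFS: "card FS \<le> t * p" unfolding FS_def
    using card_image_le[of "{..<t} \<times> {..<p}"] by (simp add: card_cartesian_product)
  have finS: "finite S" unfolding S_def using finFS Z by auto
  have cardS: "card S \<le> (2*p-1) * t"
  proof -
    have "card S \<le> card FS + card (colv A ` Z)" unfolding S_def by (rule card_Un_le)
    also have "\<dots> \<le> t * p + t * (p - 1)" using cardFS card_image_le[OF Z(1), of "colv A"] Z(3) cardFs' by linarith
    also have "\<dots> = (2*p-1) * t" by (cases p) (auto simp: algebra_simps)
    finally show ?thesis .
  qed
  have Asym: "\<And>i j. A i j = A j i" unfolding A_def by (rule qm_sym)
  have cO: "closedv (orth U)" by (rule closed_orth) (use val in \<open>auto simp: valid_def\<close>)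
  have FSorth: "\<And>w. fin w \<Longrightarrow> \<forall>f\<in>FS. app f w = 0 \<Longrightarrow> w \<in> orth U"
  proof -
    fix w assume w: "fin w" "\<forall>f\<in>FS. app f w = 0"
    show "w \<in> orth U" unfolding orth_def
    proof (intro CollectI conjI ballI allI impI)
      show "fin w" by fact
      fix u k assume u: "u \<in> set U" and k: "k < p"
      then obtain b where b: "b < t" "u = U!b" by (metis in_set_conv_nth t_def)
      have "rowf (M k) (U!b) \<in> FS" unfolding FS_def using b k by force
      then have "app (rowf (M k) (U!b)) w = 0" using w by blast
      then show "bil (M k) u w = 0" using app_rowf[OF finU[OF b(1)] w(1)] b by simp
    qed
  qed
  have spanFS: "fs.span FS \<subseteq> fs.span S" unfolding S_def by (rule fs.span_mono) auto
  have img: "mat_image A \<subseteq> fs.span S"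
  proof
    fix v assume "v \<in> mat_image A"
    then obtain x where x: "v = colv A x" "fin x" by (auto simp: mat_image_colv)
    define \<beta> where "\<beta> b = bil (M (kk b)) (U!b) x / bil (M (kk b)) (U!b) (U!b)" for b
    define s where "s = (\<Sum>b<t. fscale (\<beta> b) (U!b))"
    have fins: "fin s" unfolding s_def using finU by auto
    have "x - s \<in> H0" unfolding H0_def
    proof (intro CollectI conjI allI impI)
      show "fin (x - s)" using x fins by simp
      fix b assume b: "b < t"
      have "bil (M (kk b)) (U!b) s = (\<Sum>b'<t. bil (M (kk b)) (U!b) (fscale (\<beta> b') (U!b')))"
        unfolding s_def by (rule bil_sum2) (use finU b in auto)
      also have "\<dots> = (\<Sum>b'<t. \<beta> b' * bil (M (kk b)) (U!b) (U!b'))"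
        by (intro sum.cong refl bil_scale2) (use finU b in auto)
      also have "\<dots> = (\<Sum>b'<t. if b' = b then \<beta> b * bil (M (kk b)) (U!b) (U!b) else 0)"
        by (intro sum.cong refl) (use b orthB kk in auto)
      also have "\<dots> = \<beta> b * bil (M (kk b)) (U!b) (U!b)" using b by simp
      also have "\<dots> = bil (M (kk b)) (U!b) x" unfolding \<beta>_def using kk[OF b] by simp
      finally show "bil (M (kk b)) (U!b) (x - s) = 0" using finU[OF b] x fins by (simp add: bil_diff2)
    qed
    then obtain \<alpha> where \<alpha>: "x - s - (\<Sum>z\<in>Z. fscale (\<alpha> z) z) \<in> H0"
      "\<forall>f\<in>Fs'. app f (x - s - (\<Sum>z\<in>Z. fscale (\<alpha> z) z)) = 0" using Z(4) by blast
    define y where "y = (\<Sum>z\<in>Z. fscale (\<alpha> z) z)"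
    define h where "h = x - s - y"
    have finZ: "\<And>z. z \<in> Z \<Longrightarrow> fin z" using Z(2) by (auto simp: H0_def)
    have finy: "fin y" unfolding y_def using Z(1) finZ by auto
    have finh: "fin h" unfolding h_def using x fins finy by simp
    have hO: "h \<in> orth U" unfolding orth_def
    proof (intro CollectI conjI ballI allI impI)
      show "fin h" by fact
      fix u k assume u: "u \<in> set U" and k: "k < p"
      then obtain b where b: "b < t" "u = U!b" by (metis in_set_conv_nth t_def)
      show "bil (M k) u h = 0"
      proof (cases "k = kk b")
        case True then show ?thesis using \<alpha>(1) b by (simp add: H0_def h_def y_def)
      next
        case False
        then have "rowf (M k) (U!b) \<in> Fs'" unfolding Fs'_def using b k by force
        then have "app (rowf (M k) (U!b)) h = 0" using \<alpha>(2) by (simp add: h_def y_def)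
        then show ?thesis using app_rowf[OF finU[OF b(1)] finh] b by simp
      qed
    qed
    have xe: "x = h + y + s" unfolding h_def by simp
    have "colv A x = colv A h + colv A y + colv A s"
      using xe finh finy fins by (metis colv_add fin_add)
    moreover have "colv A h \<in> fs.span S"
    proof -
      have "colv A h \<in> fs.span FS"
      proof (rule func_span[OF finFS])
        fix w assume w: "fin w" "\<forall>f\<in>FS. app f w = 0"
        have "w \<in> orth U" by (rule FSorth[OF w])
        then show "app (colv A h) w = 0"
          using polarize[OF cO Asym _ \<open>w \<in> orth U\<close> hO] van app_colv[OF finh w(1)] unfolding A_def
          by simp
      qed
      then show ?thesis using spanFS by blast
    qed
    moreover have "colv A y \<in> fs.span S"
    proof -
      have "colv A y = (\<Sum>z\<in>Z. fscale (\<alpha> z) (colv A z))"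
        unfolding y_def using Z(1) finZ by (simp add: colv_sum colv_scale)
      also have "\<dots> \<in> fs.span S"
        by (intro fs.span_sum fs.span_scale fs.span_base) (auto simp: S_def)
      finally show ?thesis .
    qed
    moreover have "colv A s \<in> fs.span S"
    proof -
      have "colv A s = (\<Sum>b<t. fscale (\<beta> b) (colv A (U!b)))"
        unfolding s_def by (subst colv_sum) (use finU in \<open>auto intro!: sum.cong simp: colv_scale\<close>)
      also have "\<dots> \<in> fs.span FS"
      proof (intro fs.span_sum fs.span_scale)
        fix b assume b: "b \<in> {..<t}"
        have "colv A (U!b) = (\<Sum>k<p. fscale (mu k) (rowf (M k) (U!b)))"
          unfolding A_def colv_rowf[OF qm_sym] unfolding qm_def by (rule rowf_comb)
        also have "\<dots> \<in> fs.span FS"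
          by (intro fs.span_sum fs.span_scale fs.span_base) (use b in \<open>auto simp: FS_def\<close>)
        finally show "colv A (U!b) \<in> fs.span FS" .
      qed
      finally show ?thesis using spanFS by blast
    qed
    ultimately show "v \<in> fs.span S" using x(1) by (metis fs.span_add)
  qed
  show ?thesis using rank_bound[OF img finS cardS] unfolding A_def t_def .
qed

end


context symsetup begin

lemma nonvanish:
  assumes "valid U" "enat ((2*p-1) * length U) < mat_rank (qm mu)"
  shows "\<exists>x\<in>orth U. bil (qm mu) x x \<noteq> 0"
  using rank_orth[OF assms(1)] assms(2) by force

lemma orth_mono: "orth (u # U) \<subseteq> orth U" by (auto simp: orth_def)

lemma bil_indicator: "k1 < p \<Longrightarrow> (\<Sum>k<p. (if k = k1 then 1 else 0) * f k) = (f k1 :: complex)"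
proof -
  assume "k1 < p"
  have "(\<Sum>k<p. (if k = k1 then 1 else 0) * f k) = (\<Sum>k<p. if k = k1 then f k else 0)"
    by (rule sum.cong) auto
  then show ?thesis using \<open>k1 < p\<close> by simp
qed

lemma bil_indicator2: "k1 < p \<Longrightarrow> (\<Sum>k<p. f k * (if k = k1 then 1 else 0)) = (f k1 :: complex)"
  using bil_indicator[of k1 f] by (simp add: mult.commute)

lemma csqrt_sq: "csqrt z * csqrt z = z" by (metis power2_csqrt power2_eq_square)

lemma find_u:
  assumes "valid U" "set ks \<subseteq> {..<p}" "distinct ks" "\<forall>k\<in>set ks. mu k = 0"
    "\<And>nu. \<exists>k<p. nu k \<noteq> 0 \<Longrightarrow> enat ((2*p-1) * (length U + length ks)) < mat_rank (qm nu)"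
    "\<exists>k<p. mu k \<noteq> 0"
  shows "\<exists>u\<in>orth U. (\<forall>k\<in>set ks. bil (M k) u u = 0) \<and> bil (qm mu) u u = 1"
  using assms
proof (induction ks arbitrary: U mu)
  case Nil
  obtain x where x: "x \<in> orth U" "bil (qm mu) x x \<noteq> 0"
    using nonvanish[OF Nil(1)] Nil(5)[OF Nil(6)] by auto
  define c where "c = bil (qm mu) x x"
  define u where "u = fscale (1 / csqrt c) x"
  have fx: "fin x" using x by (simp add: orth_def)
  have "u \<in> orth U" unfolding u_def using closed_orth[of U] Nil(1) x(1)
    by (auto simp: closedv_def valid_def)
  moreover have "bil (qm mu) u u = 1"
    unfolding u_def using fx x(2) by (simp add: bil_scale1 bil_scale2 c_def[symmetric] power2_eq_square[symmetric])
  ultimately show ?case by auto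
next
  case (Cons k1 ks)
  have finU: "\<forall>u\<in>set U. fin u" using Cons.prems(1) by (simp add: valid_def)
  have "\<exists>u\<in>orth U. (\<forall>k\<in>set ks. bil (M k) u u = 0) \<and> bil (qm mu) u u = 1"
  proof (rule Cons.IH[OF Cons.prems(1)])
    show "set ks \<subseteq> {..<p}" "distinct ks" "\<forall>k\<in>set ks. mu k = 0" "\<exists>k<p. mu k \<noteq> 0"
      using Cons.prems(2,3,4,6) by auto
    fix nu :: "nat \<Rightarrow> complex" assume nu: "\<exists>k<p. nu k \<noteq> 0"
    have "enat ((2*p-1) * (length U + length ks)) \<le> enat ((2*p-1) * (length U + length (k1 # ks)))"
      by simp
    then show "enat ((2*p-1) * (length U + length ks)) < mat_rank (qm nu)"
      using Cons.prems(5)[OF nu] by (rule le_less_trans)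
  qed
  then obtain u1 where u1: "u1 \<in> orth U" "\<forall>k\<in>set ks. bil (M k) u1 u1 = 0" "bil (qm mu) u1 u1 = 1"
    by blast
  have fu1: "fin u1" using u1 by (simp add: orth_def)
  define a where "a = bil (M k1) u1 u1"
  show ?case
  proof (cases "a = 0")
    case True
    then show ?thesis using u1 a_def by auto
  next
    case False
    have k1p: "k1 < p" using Cons.prems(2) by auto
    define mu' where "mu' k = (if k = k1 then 1 else 0) - a * mu k" for k
    define U' where "U' = u1 # U"
    have valU': "valid U'"
      unfolding valid_def U'_def
    proof (intro conjI ballI allI impI)
      show "fin u" if "u \<in> set (u1 # U)" for u using that fu1 finU by auto
      fix u assume uin: "u \<in> set (u1 # U)"
      show "\<exists>k<p. bil (M k) u u \<noteq> 0"
      proof (cases "u = u1")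
        case True
        have "(\<Sum>k<p. mu k * bil (M k) u1 u1) = 1" using u1(3) by (simp add: bil_qm)
        then obtain k where "k < p" "mu k * bil (M k) u1 u1 \<noteq> 0"
          by (metis (no_types, lifting) lessThan_iff one_neq_zero sum.neutral)
        then show ?thesis using \<open>u = u1\<close> by auto
      next
        case False
        then have "u \<in> set U" using uin by auto
        then show ?thesis using Cons.prems(1) by (auto simp: valid_def)
      qed
    next
      fix b b' k assume b: "b < length (u1 # U)" "b' < length (u1 # U)" "b \<noteq> b'" "k < p"
      show "bil (M k) ((u1 # U) ! b) ((u1 # U) ! b') = 0"
      proof (cases b)
        case 0
        then obtain c where c: "b' = Suc c" "c < length U" using b by (cases b') auto
        then have "bil (M k) (U!c) u1 = 0" using u1(1) b(4) by (auto simp: orth_def)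
        then show ?thesis using 0 c bilM_sym[OF b(4) fu1, of "U!c"] finU by auto
      next
        case (Suc c)
        show ?thesis
        proof (cases b')
          case 0
          then show ?thesis using Suc u1(1) b by (auto simp: orth_def)
        next
          case (Suc c')
          then show ?thesis using \<open>b = Suc c\<close> b Cons.prems(1) by (auto simp: valid_def)
        qed
      qed
    qed
    have "\<exists>u\<in>orth U'. (\<forall>k\<in>set ks. bil (M k) u u = 0) \<and> bil (qm mu') u u = 1"
    proof (rule Cons.IH[OF valU'])
      show "set ks \<subseteq> {..<p}" "distinct ks" using Cons.prems by auto
      show "\<forall>k\<in>set ks. mu' k = 0" using Cons.prems(3,4) by (auto simp: mu'_def)
      show "\<exists>k<p. mu' k \<noteq> 0" using k1p Cons.prems(3,4) by (auto simp: mu'_def intro!: exI[of _ k1])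
      fix nu :: "nat \<Rightarrow> complex" assume "\<exists>k<p. nu k \<noteq> 0"
      then show "enat ((2*p-1) * (length U' + length ks)) < mat_rank (qm nu)"
        using Cons.prems(5) by (simp add: U'_def)
    qed
    then obtain u2 where u2: "u2 \<in> orth U'" "\<forall>k\<in>set ks. bil (M k) u2 u2 = 0" "bil (qm mu') u2 u2 = 1"
      by blast
    have fu2: "fin u2" using u2 by (simp add: orth_def)
    define b1 where "b1 = bil (M k1) u2 u2"
    define u where "u = fscale (csqrt b1) u1 + fscale (csqrt (-a)) u2"
    have cross: "\<And>k. k < p \<Longrightarrow> bil (M k) u1 u2 = 0" using u2(1) by (auto simp: orth_def U'_def)
    have cross2: "\<And>k. k < p \<Longrightarrow> bil (M k) u2 u1 = 0" using cross bilM_sym fu1 fu2 by metis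
    have quad: "bil (M k) u u = b1 * bil (M k) u1 u1 - a * bil (M k) u2 u2" if k: "k < p" for k
      unfolding u_def using fu1 fu2 cross[OF k] cross2[OF k]
      by (simp add: bil_add1 bil_add2 bil_scale1 bil_scale2 mult.assoc[symmetric] csqrt_sq)
    have "u \<in> orth U"
    proof -
      have "u2 \<in> orth U" using u2(1) orth_mono unfolding U'_def by blast
      then show ?thesis unfolding u_def using closed_orth[OF finU] u1(1)
        by (auto simp: closedv_def)
    qed
    moreover have "\<forall>k\<in>set (k1 # ks). bil (M k) u u = 0"
      using quad u1(2) u2(2) Cons.prems(2) by (auto simp: a_def b1_def)
    moreover have "bil (qm mu) u u = 1"
    proof -
      have "bil (qm mu) u u = (\<Sum>k<p. mu k * (b1 * bil (M k) u1 u1 - a * bil (M k) u2 u2))"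
        by (simp add: bil_qm quad)
      also have "\<dots> = b1 * bil (qm mu) u1 u1 - a * bil (qm mu) u2 u2"
        by (simp add: bil_qm sum_distrib_left sum_subtractf algebra_simps)
      also have "bil (qm mu') u2 u2 = b1 - a * bil (qm mu) u2 u2"
        unfolding bil_qm mu'_def
        by (simp add: algebra_simps sum_subtractf sum_distrib_left bil_indicator[OF k1p] bil_indicator2[OF k1p] b1_def)
      ultimately show ?thesis using u1(3) u2(3) by simp
    qed
    ultimately show ?thesis by blast
  qed
qed

end


context symsetup begin

lemma build:
  assumes rk: "\<And>nu j. \<exists>k<p. nu k \<noteq> 0 \<Longrightarrow> j < N \<Longrightarrow> enat ((2*p-1) * (j + (p - 1))) < mat_rank (qm nu)"
    and kd: "\<And>j. j < N \<Longrightarrow> kd j < p"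
  shows "\<exists>u. (\<forall>j<N. fin (u j)) \<and> (\<forall>j<N. \<forall>j'<N. j \<noteq> j' \<longrightarrow> (\<forall>k<p. bil (M k) (u j) (u j') = 0))
     \<and> (\<forall>j<N. \<forall>k<p. bil (M k) (u j) (u j) = (if k = kd j then 1 else 0))"
  using rk kd
proof (induction N)
  case 0
  then show ?case by auto
next
  case (Suc N)
  obtain u where u: "\<forall>j<N. fin (u j)" "\<forall>j<N. \<forall>j'<N. j \<noteq> j' \<longrightarrow> (\<forall>k<p. bil (M k) (u j) (u j') = 0)"
     "\<forall>j<N. \<forall>k<p. bil (M k) (u j) (u j) = (if k = kd j then 1 else 0)"
  proof -
    have "\<exists>u. (\<forall>j<N. fin (u j)) \<and> (\<forall>j<N. \<forall>j'<N. j \<noteq> j' \<longrightarrow> (\<forall>k<p. bil (M k) (u j) (u j') = 0))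
     \<and> (\<forall>j<N. \<forall>k<p. bil (M k) (u j) (u j) = (if k = kd j then 1 else 0))"
    proof (rule Suc.IH)
      fix nu :: "nat \<Rightarrow> complex" and j assume "\<exists>k<p. nu k \<noteq> 0" "j < N"
      then show "enat ((2*p-1) * (j + (p - 1))) < mat_rank (qm nu)" using Suc.prems(1) by simp
    next
      fix j assume "j < N" then show "kd j < p" using Suc.prems(2) by simp
    qed
    then show ?thesis using that by blast
  qed
  define U where "U = map u [0..<N]"
  have valU: "valid U" unfolding valid_def U_def
  proof (intro conjI ballI allI impI)
    show "fin x" if "x \<in> set (map u [0..<N])" for x using that u(1) by auto
    fix b b' k assume "b < length (map u [0..<N])" "b' < length (map u [0..<N])" "b \<noteq> b'" "k < p"
    then show "bil (M k) (map u [0..<N] ! b) (map u [0..<N] ! b') = 0" using u(2) by simp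
  next
    fix x assume "x \<in> set (map u [0..<N])"
    then obtain j where j: "j < N" "x = u j" by auto
    then show "\<exists>k<p. bil (M k) x x \<noteq> 0" using u(3) Suc.prems(2)[of j] by (auto intro!: exI[of _ "kd j"])
  qed
  define k0 where "k0 = kd N"
  have k0p: "k0 < p" using Suc.prems(2) by (simp add: k0_def)
  define ks where "ks = filter (\<lambda>k. k \<noteq> k0) [0..<p]"
  define mu :: "nat \<Rightarrow> complex" where "mu k = (if k = k0 then 1 else 0)" for k
  have lks: "length ks \<le> p - 1"
  proof -
    have "length ks < length [0..<p]" unfolding ks_def by (rule length_filter_less) (use k0p in auto)
    then show ?thesis by simp
  qed
  have "\<exists>v\<in>orth U. (\<forall>k\<in>set ks. bil (M k) v v = 0) \<and> bil (qm mu) v v = 1"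
  proof (rule find_u[OF valU])
    show "set ks \<subseteq> {..<p}" "distinct ks" "\<forall>k\<in>set ks. mu k = 0" "\<exists>k<p. mu k \<noteq> 0"
      using k0p by (auto simp: ks_def mu_def)
    fix nu :: "nat \<Rightarrow> complex" assume nu: "\<exists>k<p. nu k \<noteq> 0"
    have "enat ((2*p-1) * (length U + length ks)) \<le> enat ((2*p-1) * (N + (p - 1)))"
    proof -
      have "length U + length ks \<le> N + (p - 1)" using lks by (simp add: U_def)
      then have "(2*p-1) * (length U + length ks) \<le> (2*p-1) * (N + (p - 1))" by (rule mult_le_mono2)
      then show ?thesis by (simp only: enat_ord_simps)
    qed
    then show "enat ((2*p-1) * (length U + length ks)) < mat_rank (qm nu)"
      using Suc.prems(1)[OF nu, of N] by (meson le_less_trans lessI)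
  qed
  then obtain v where v: "v \<in> orth U" "\<forall>k\<in>set ks. bil (M k) v v = 0" "bil (qm mu) v v = 1" by blast
  have fv: "fin v" using v by (simp add: orth_def)
  have vk0: "bil (M k0) v v = 1"
    using v(3) k0p by (simp add: bil_qm mu_def bil_indicator)
  have vorth: "\<And>j k. j < N \<Longrightarrow> k < p \<Longrightarrow> bil (M k) (u j) v = 0"
    using v(1) by (auto simp: orth_def U_def)
  show ?case
  proof (intro exI[of _ "u(N := v)"] conjI allI impI)
    fix j assume "j < Suc N"
    then show "fin ((u(N := v)) j)" using u(1) fv by (cases "j = N") auto
  next
    fix j j' k assume j: "j < Suc N" "j' < Suc N" "j \<noteq> j'" "k < p"
    show "bil (M k) ((u(N := v)) j) ((u(N := v)) j') = 0"
    proof (cases "j = N")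
      case True
      then have "j' < N" using j by auto
      then show ?thesis using True j vorth[of j' k] bilM_sym[OF j(4) fv u(1)[rule_format, OF \<open>j' < N\<close>]] by auto
    next
      case False
      then have jN: "j < N" using j by auto
      show ?thesis
      proof (cases "j' = N")
        case True then show ?thesis using jN vorth j by auto
      next
        case False then show ?thesis using jN j u(2) by auto
      qed
    qed
  next
    fix j k assume j: "j < Suc N" and k: "k < p"
    show "bil (M k) ((u(N := v)) j) ((u(N := v)) j) = (if k = kd j then 1 else 0)"
    proof (cases "j = N")
      case True
      then show ?thesis using vk0 v(2) k by (auto simp: k0_def ks_def)
    next
      case False
      then show ?thesis using u(3) j k by auto
    qed
  qed
qed

end


definition factors :: "nat \<Rightarrow> (nat \<Rightarrow> nat \<Rightarrow> complex) \<Rightarrow> bool" where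
  "factors n X \<longleftrightarrow> (\<exists>c::nat \<Rightarrow> nat \<Rightarrow> complex. \<forall>i<n. \<forall>j<n. X i j = (\<Sum>s<n. c s i * c s j))"

lemma csqrt_sq': "csqrt z * csqrt z = z" by (metis power2_csqrt power2_eq_square)

lemma factor_caseA:
  assumes IH: "\<And>Y. (\<forall>i j. Y i j = Y j i) \<Longrightarrow> factors n Y"
    and sym: "\<forall>i j. X i j = X j i" and nz: "X n n \<noteq> 0"
  shows "factors (Suc n) X"
proof -
  define r where "r = csqrt (X n n)"
  have r0: "r \<noteq> 0" using nz by (auto simp: r_def)
  have rr: "r * r = X n n" by (simp add: r_def csqrt_sq')
  define w where "w i = X i n / r" for i
  have wn: "w n = r" using rr r0 by (simp add: w_def field_simps)
  define Y where "Y i j = X i j - w i * w j" for i j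
  have "\<forall>i j. Y i j = Y j i" using sym by (auto simp: Y_def)
  then obtain c' where c': "\<And>i j. i < n \<Longrightarrow> j < n \<Longrightarrow> Y i j = (\<Sum>s<n. c' s i * c' s j)"
    using IH unfolding factors_def by blast
  define c where "c s i = (if s = n then w i else if i = n then 0 else c' s i)" for s i
  show ?thesis unfolding factors_def
  proof (intro exI[of _ c] allI impI)
    fix i j assume i: "i < Suc n" and j: "j < Suc n"
    have split: "(\<Sum>s<Suc n. c s i * c s j) = (\<Sum>s<n. c s i * c s j) + w i * w j"
      by (simp add: c_def)
    show "X i j = (\<Sum>s<Suc n. c s i * c s j)"
    proof (cases "i = n \<or> j = n")
      case True
      then have "(\<Sum>s<n. c s i * c s j) = 0" by (auto simp: c_def intro!: sum.neutral)
      then show ?thesis using True split wn r0 sym by (auto simp: w_def field_simps)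
    next
      case False
      then have "i < n" "j < n" using i j by auto
      then have "(\<Sum>s<n. c s i * c s j) = Y i j" using c' False by (simp add: c_def)
      then show ?thesis using split by (simp add: Y_def)
    qed
  qed
qed

lemma factor_all: "(\<forall>i j. X i j = X j i) \<Longrightarrow> factors n X"
proof (induction n arbitrary: X)
  case 0
  then show ?case by (simp add: factors_def)
next
  case (Suc n)
  have sym: "\<forall>i j. X i j = X j i" by fact
  show ?case
  proof (cases "X n n \<noteq> 0")
    case True
    then show ?thesis using factor_caseA[OF Suc.IH sym] by blast
  next
    case False
    then have Xnn: "X n n = 0" by simp
    show ?thesis
    proof (cases "\<exists>m<n. X n m \<noteq> 0")
      case True
      then obtain m where m: "m < n" "X n m \<noteq> 0" by blast
      obtain t :: complex where t: "2 * t * X n m + t * t * X m m \<noteq> 0" "t * t = 1"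
      proof (cases "2 * X n m + X m m = 0")
        case True
        then have "2 * (-1) * X n m + (-1) * (-1) * X m m \<noteq> 0" using m by auto
        then show ?thesis using that[of "-1"] by simp
      next
        case False then show ?thesis using that[of 1] by simp
      qed
      define Y where "Y i j = X i j + (if i = n then t * X m j else 0) + (if j = n then t * X i m else 0)
          + (if i = n \<and> j = n then t * t * X m m else 0)" for i j
      have symY: "\<forall>i j. Y i j = Y j i" using sym by (auto simp: Y_def)
      have Ynn: "Y n n \<noteq> 0" using t Xnn sym m by (simp add: Y_def algebra_simps)
      obtain d where d: "\<And>i j. i < Suc n \<Longrightarrow> j < Suc n \<Longrightarrow> Y i j = (\<Sum>s<Suc n. d s i * d s j)"
        using factor_caseA[OF Suc.IH symY Ynn] unfolding factors_def by blast
      define c where "c s i = d s i - (if i = n then t * d s m else 0)" for s i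
      have mn: "m \<noteq> n" "m < Suc n" using m by auto
      show ?thesis unfolding factors_def
      proof (intro exI[of _ c] allI impI)
        fix i j assume i: "i < Suc n" and j: "j < Suc n"
        show "X i j = (\<Sum>s<Suc n. c s i * c s j)"
        proof (cases "i = n")
          case True note iT = True
          show ?thesis
          proof (cases "j = n")
            case True
            have "(\<Sum>s<Suc n. c s i * c s j) = (\<Sum>s<Suc n. d s n * d s n) - t * (\<Sum>s<Suc n. d s n * d s m)
               - t * (\<Sum>s<Suc n. d s m * d s n) + t * t * (\<Sum>s<Suc n. d s m * d s m)"
              using iT True by (simp add: c_def algebra_simps sum_subtractf sum.distrib sum_distrib_left)
            also have "\<dots> = Y n n - t * Y n m - t * Y m n + t * t * Y m m"
              using d mn by simp
            also have "\<dots> = 0" using mn Xnn sym by (simp add: Y_def algebra_simps)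
            finally show ?thesis using iT True Xnn by simp
          next
            case False
            have "(\<Sum>s<Suc n. c s i * c s j) = (\<Sum>s<Suc n. d s n * d s j) - t * (\<Sum>s<Suc n. d s m * d s j)"
              using iT False by (simp add: c_def algebra_simps sum_subtractf sum_distrib_left)
            also have "\<dots> = Y n j - t * Y m j" using d mn j by simp
            also have "\<dots> = X i j" using mn iT False by (simp add: Y_def algebra_simps)
            finally show ?thesis by simp
          qed
        next
          case False note iF = False
          show ?thesis
          proof (cases "j = n")
            case True
            have "(\<Sum>s<Suc n. c s i * c s j) = (\<Sum>s<Suc n. d s i * d s n) - t * (\<Sum>s<Suc n. d s i * d s m)"
              using iF True by (simp add: c_def algebra_simps sum_subtractf sum_distrib_left)
            also have "\<dots> = Y i n - t * Y i m" using d mn i by simp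
            also have "\<dots> = X i j" using mn iF True by (simp add: Y_def algebra_simps)
            finally show ?thesis by simp
          next
            case False
            have "(\<Sum>s<Suc n. c s i * c s j) = (\<Sum>s<Suc n. d s i * d s j)"
              using iF False by (simp add: c_def)
            also have "\<dots> = Y i j" using d i j by simp
            also have "\<dots> = X i j" using iF False by (simp add: Y_def)
            finally show ?thesis by simp
          qed
        qed
      qed
    next
      case False
      then have X0: "\<And>m. m < n \<Longrightarrow> X n m = 0" by auto
      obtain c' where c': "\<And>i j. i < n \<Longrightarrow> j < n \<Longrightarrow> X i j = (\<Sum>s<n. c' s i * c' s j)"
        using Suc.IH[OF sym] unfolding factors_def by blast
      define c where "c s i = (if s = n then 0 else if i = n then 0 else c' s i)" for s i
      show ?thesis unfolding factors_def
      proof (intro exI[of _ c] allI impI)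
        fix i j assume i: "i < Suc n" and j: "j < Suc n"
        show "X i j = (\<Sum>s<Suc n. c s i * c s j)"
        proof (cases "i = n \<or> j = n")
          case True
          then have "X i j = 0" using X0 Xnn sym i j by (metis less_SucE)
          moreover have "(\<Sum>s<Suc n. c s i * c s j) = 0" using True by (auto simp: c_def intro!: sum.neutral)
          ultimately show ?thesis by simp
        next
          case False
          then show ?thesis using c' i j by (simp add: c_def)
        qed
      qed
    qed
  qed
qed



definition gmat :: "(nat \<Rightarrow> nat \<Rightarrow> complex) \<Rightarrow> nat \<Rightarrow> nat \<Rightarrow> complex \<Rightarrow> nat \<Rightarrow> nat \<Rightarrow> complex" where
  "gmat b N0 l e i a = (if i < l then (if a < N0 then b i a else if a = N0 + i then e else 0)
                        else (if a = i - l then 1 else 0))"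

definition hmat :: "(nat \<Rightarrow> nat \<Rightarrow> complex) \<Rightarrow> nat \<Rightarrow> nat \<Rightarrow> complex \<Rightarrow> nat \<Rightarrow> nat \<Rightarrow> complex" where
  "hmat b N0 l e a j = (if a < N0 then (if j = a + l then 1 else 0)
      else (if j = a - N0 then 1 / e else if l \<le> j then - b (a - N0) (j - l) / e else 0))"

lemma gh_prod:
  assumes e: "e \<noteq> 0" and i: "i < N0 + l" and j: "j < N0 + l"
  shows "(\<Sum>k<N0 + l. gmat b N0 l e i k * hmat b N0 l e k j) = (if i = j then 1 else 0)"
proof (cases "i < l")
  case True
  have "(\<Sum>k<N0 + l. gmat b N0 l e i k * hmat b N0 l e k j) =
        (\<Sum>k<N0 + l. (if k = j - l then (if l \<le> j \<and> j - l < N0 then b i (j - l) else 0) else 0)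
                     + (if k = N0 + i then e * hmat b N0 l e k j else 0))"
  proof (intro sum.cong refl)
    fix k assume "k \<in> {..<N0 + l}"
    show "gmat b N0 l e i k * hmat b N0 l e k j =
      (if k = j - l then (if l \<le> j \<and> j - l < N0 then b i (j - l) else 0) else 0)
                     + (if k = N0 + i then e * hmat b N0 l e k j else 0)"
      using True by (cases "k < N0") (auto simp: gmat_def hmat_def)
  qed
  also have "\<dots> = (if l \<le> j \<and> j - l < N0 then b i (j - l) else 0) + e * hmat b N0 l e (N0 + i) j"
    using True j by (simp add: sum.distrib)
  also have "\<dots> = (if i = j then 1 else 0)"
    using True j e by (auto simp: hmat_def)
  finally show ?thesis .
next
  case False
  have "(\<Sum>k<N0 + l. gmat b N0 l e i k * hmat b N0 l e k j) =
        (\<Sum>k<N0 + l. if k = i - l then hmat b N0 l e k j else 0)"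
    using False by (intro sum.cong refl) (auto simp: gmat_def)
  also have "\<dots> = hmat b N0 l e (i - l) j"
  proof -
    have "i - l \<in> {..<N0 + l}" using i by auto
    then show ?thesis by simp
  qed
  also have "\<dots> = (if i = j then 1 else 0)" using i False by (auto simp: hmat_def)
  finally show ?thesis .
qed

lemma hg_prod:
  assumes e: "e \<noteq> 0" and i: "i < N0 + l" and j: "j < N0 + l"
  shows "(\<Sum>k<N0 + l. hmat b N0 l e i k * gmat b N0 l e k j) = (if i = j then 1 else 0)"
proof (cases "i < N0")
  case True
  have "(\<Sum>k<N0 + l. hmat b N0 l e i k * gmat b N0 l e k j) =
        (\<Sum>k<N0 + l. if k = i + l then gmat b N0 l e k j else 0)"
    using True by (intro sum.cong refl) (auto simp: hmat_def)
  also have "\<dots> = gmat b N0 l e (i + l) j" using True by simp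
  also have "\<dots> = (if i = j then 1 else 0)" by (auto simp: gmat_def)
  finally show ?thesis .
next
  case False
  define i' where "i' = i - N0"
  have i': "i' < l" using i False by (simp add: i'_def)
  have "(\<Sum>k<N0 + l. hmat b N0 l e i k * gmat b N0 l e k j) =
        (\<Sum>k<N0 + l. (if k = i' then gmat b N0 l e i' j / e else 0)
              + (if k = j + l then - b i' j / e else 0))"
  proof (intro sum.cong refl)
    fix k assume k: "k \<in> {..<N0 + l}"
    show "hmat b N0 l e i k * gmat b N0 l e k j = (if k = i' then gmat b N0 l e i' j / e else 0)
              + (if k = j + l then - b i' j / e else 0)"
    proof (cases "k = i'")
      case True then show ?thesis using i' False by (auto simp: hmat_def i'_def)
    next
      case kF: False
      show ?thesis
      proof (cases "l \<le> k")
        case True then show ?thesis using kF False by (auto simp: hmat_def gmat_def i'_def)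
      next
        case lF: False then show ?thesis using kF False by (auto simp: hmat_def i'_def)
      qed
    qed
  qed
  also have "\<dots> = gmat b N0 l e i' j / e + (if j + l < N0 + l then - b i' j / e else 0)"
    using i' by (simp add: sum.distrib)
  also have "\<dots> = (if i = j then 1 else 0)"
    using i' e False i j by (auto simp: gmat_def i'_def field_simps)
  finally show ?thesis .
qed

lemma g_invertible: "e \<noteq> 0 \<Longrightarrow> invertible_n (N0 + l) (gmat b N0 l e)"
  unfolding invertible_n_def using gh_prod hg_prod by blast



context symsetup begin

lemma realize:
  assumes rk: "\<And>nu j. \<exists>k<p. nu k \<noteq> 0 \<Longrightarrow> j < p * l \<Longrightarrow> enat ((2*p-1) * (j + (p - 1))) < mat_rank (qm nu)"
    and X: "X \<in> sym_l_tuples p l"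
  shows "\<exists>b. (\<forall>i<l. fin (b i)) \<and> (\<forall>k<p. \<forall>i<l. \<forall>i'<l. bil (M k) (b i) (b i') = X k i i')"
proof (cases "l = 0")
  case True then show ?thesis by auto
next
  case False
  then have l0: "l > 0" by simp
  define N where "N = p * l"
  define kd where "kd j = j div l" for j
  have kdp: "\<And>j. j < N \<Longrightarrow> kd j < p" unfolding kd_def N_def using l0
    by (simp add: less_mult_imp_div_less)
  obtain u where u: "\<forall>j<N. fin (u j)" "\<forall>j<N. \<forall>j'<N. j \<noteq> j' \<longrightarrow> (\<forall>k<p. bil (M k) (u j) (u j') = 0)"
     "\<forall>j<N. \<forall>k<p. bil (M k) (u j) (u j) = (if k = kd j then 1 else 0)"
  proof -
    have "\<exists>u. (\<forall>j<N. fin (u j)) \<and> (\<forall>j<N. \<forall>j'<N. j \<noteq> j' \<longrightarrow> (\<forall>k<p. bil (M k) (u j) (u j') = 0))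
     \<and> (\<forall>j<N. \<forall>k<p. bil (M k) (u j) (u j) = (if k = kd j then 1 else 0))"
    proof (rule build)
      fix nu :: "nat \<Rightarrow> complex" and j assume "\<exists>k<p. nu k \<noteq> 0" "j < N"
      then show "enat ((2*p-1) * (j + (p - 1))) < mat_rank (qm nu)" using rk unfolding N_def by blast
    next
      fix j assume "j < N" then show "kd j < p" by (rule kdp)
    qed
    then show ?thesis using that by blast
  qed
  have "\<forall>k. \<exists>c. \<forall>i<l. \<forall>j<l. X k i j = (\<Sum>s<l. c s i * c s j)"
  proof
    fix k
    have "\<forall>i j. X k i j = X k j i" using X by (simp add: sym_l_tuples_def)
    then show "\<exists>c. \<forall>i<l. \<forall>j<l. X k i j = (\<Sum>s<l. c s i * c s j)"
      using factor_all unfolding factors_def by blast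
  qed
  then obtain cc where cc: "\<And>k i j. i < l \<Longrightarrow> j < l \<Longrightarrow> X k i j = (\<Sum>s<l. cc k s i * cc k s j)"
    by metis
  define coef where "coef j i = cc (j div l) (j mod l) i" for j i
  define b where "b i = (\<Sum>j<N. fscale (coef j i) (u j))" for i
  have finb: "\<And>i. fin (b i)" unfolding b_def using u(1) by auto
  show ?thesis
  proof (intro exI[of _ b] conjI allI impI)
    fix i assume "i < l" show "fin (b i)" by (rule finb)
  next
    fix k i i' assume k: "k < p" and i: "i < l" and i': "i' < l"
    have "bil (M k) (b i) (b i') = (\<Sum>j<N. bil (M k) (fscale (coef j i) (u j)) (b i'))"
      unfolding b_def[of i] by (rule bil_sum1) (use u(1) finb in auto)
    also have "\<dots> = (\<Sum>j<N. coef j i * (\<Sum>j'<N. coef j' i' * bil (M k) (u j) (u j')))"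
    proof (intro sum.cong refl)
      fix j assume j: "j \<in> {..<N}"
      have "bil (M k) (fscale (coef j i) (u j)) (b i') = coef j i * bil (M k) (u j) (b i')"
        using u(1) j finb by (simp add: bil_scale1)
      also have "bil (M k) (u j) (b i') = (\<Sum>j'<N. bil (M k) (u j) (fscale (coef j' i') (u j')))"
        unfolding b_def[of i'] by (rule bil_sum2) (use u(1) j in auto)
      also have "\<dots> = (\<Sum>j'<N. coef j' i' * bil (M k) (u j) (u j'))"
        by (intro sum.cong refl bil_scale2) (use u(1) j in auto)
      finally show "bil (M k) (fscale (coef j i) (u j)) (b i') = coef j i * (\<Sum>j'<N. coef j' i' * bil (M k) (u j) (u j'))" .
    qed
    also have "\<dots> = (\<Sum>j<N. if kd j = k then coef j i * coef j i' else 0)"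
    proof (intro sum.cong refl)
      fix j assume j: "j \<in> {..<N}"
      have "(\<Sum>j'<N. coef j' i' * bil (M k) (u j) (u j')) =
            (\<Sum>j'<N. if j' = j then coef j i' * (if k = kd j then 1 else 0) else 0)"
        by (intro sum.cong refl) (use u(2,3) j k in auto)
      also have "\<dots> = coef j i' * (if k = kd j then 1 else 0)" using j by simp
      finally show "coef j i * (\<Sum>j'<N. coef j' i' * bil (M k) (u j) (u j')) = (if kd j = k then coef j i * coef j i' else 0)"
        by auto
    qed
    also have "\<dots> = (\<Sum>j\<in>{j\<in>{..<N}. kd j = k}. coef j i * coef j i')"
      by (rule sum.inter_filter[symmetric]) simp
    also have "{j\<in>{..<N}. kd j = k} = (\<lambda>s. k * l + s) ` {..<l}"
    proof (intro set_eqI iffI)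
      fix j assume "j \<in> {j\<in>{..<N}. kd j = k}"
      then have "j div l = k" by (simp add: kd_def)
      then have "j = k * l + j mod l" by (metis div_mult_mod_eq)
      then show "j \<in> (\<lambda>s. k * l + s) ` {..<l}" using l0 by (metis imageI lessThan_iff mod_less_divisor)
    next
      fix j assume "j \<in> (\<lambda>s. k * l + s) ` {..<l}"
      then obtain s where s: "s < l" "j = k * l + s" by auto
      have "k * l + s < Suc k * l" using s by simp
      moreover have "Suc k * l \<le> p * l" by (rule mult_le_mono1) (use k in simp)
      ultimately have "j < N" using s unfolding N_def by linarith
      moreover have "kd j = k" using s l0 by (simp add: kd_def)
      ultimately show "j \<in> {j\<in>{..<N}. kd j = k}" by simp
    qed
    also have "(\<Sum>j\<in>(\<lambda>s. k * l + s) ` {..<l}. coef j i * coef j i') = (\<Sum>s<l. cc k s i * cc k s i')"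
      by (subst sum.reindex) (use l0 in \<open>auto simp: inj_on_def coef_def\<close>)
    also have "\<dots> = X k i i'" using cc[OF i i'] by simp
    finally show "bil (M k) (b i) (b i') = X k i i'" .
  qed
qed

end


lemma pow_ge: "4 \<le> p \<Longrightarrow> 4 * p \<le> (2::nat) ^ p"
proof (induction p rule: nat_induct_at_least)
  case base then show ?case by simp
next
  case (Suc n) then show ?case by simp
qed

lemma arith_bound:
  assumes j: "j < p * l"
  shows "(2*p-1) * (j + (p - 1)) < p * 2^p * l"
proof -
  have p1: "p \<ge> 1" and l1: "l \<ge> 1" using j by (cases p; cases l; auto)+
  show ?thesis
  proof (cases "p \<ge> 4")
    case True
    have a: "(2*p-1)*(j+(p-1)) \<le> 2*p*(j+p)" by (intro mult_le_mono) auto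
    have pl: "p \<le> p * l" using l1 by simp
    have b: "j + p < 2*p*l" using j pl by linarith
    have c: "2*p*(j+p) < 2*p*(2*p*l)" using b p1 by simp
    have d: "2*p*(2*p*l) = (4*p)*(p*l)" by simp
    have e: "(4*p)*(p*l) \<le> 2^p*(p*l)" using pow_ge[OF True] by (rule mult_le_mono1)
    have "2^p*(p*l) = p * 2^p * l" by simp
    then show ?thesis using a c d e by linarith
  next
    case False
    then have "p = 1 \<or> p = 2 \<or> p = 3" using p1 by auto
    then show ?thesis using j l1 by (elim disjE; simp; linarith)
  qed
qed

lemma poly_tendsto:
  "f \<in> poly_fun \<Longrightarrow> (\<And>k i j. (\<lambda>m. Y m k i j) \<longlonglongrightarrow> X k i j) \<Longrightarrow> (\<lambda>m. f (Y m)) \<longlonglongrightarrow> f X"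
  by (induction f rule: poly_fun.induct) (auto intro: tendsto_add tendsto_mult)

lemma congr_bil: "congr_act g A i j = bil A (g i) (g j)"
  by (simp add: congr_act_def bil_def supp_def)

lemma row_embed:
  assumes "supp x \<subseteq> {..<N0}" "i < l" "\<And>a. x a = b i a"
  shows "embed_gl (N0 + l) (gmat b N0 l e) i = x + fscale e (unitv (N0 + i))"
proof
  fix a
  have xa: "a \<ge> N0 \<Longrightarrow> b i a = 0" using assms by (auto simp: supp_def)
  show "embed_gl (N0 + l) (gmat b N0 l e) i a = (x + fscale e (unitv (N0 + i))) a"
    using assms(2) xa assms(3) by (auto simp: embed_gl_def gmat_def fscale_apply unitv_def)
qed



theorem lemma3p9:
  fixes p l :: nat and M :: "nat \<Rightarrow> nat \<Rightarrow> nat \<Rightarrow> complex"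
  assumes "M \<in> sym_inf_tuples p"
    and "tuple_rank p M \<ge> enat (p * 2 ^ p * l)"
  shows "zariski_dense_in (proj_block p l ` orbit p M) (sym_l_tuples p l)"
proof -
  interpret symsetup p M
    by unfold_locales (use assms(1) in \<open>auto simp: sym_inf_tuples_def sym_inf_def\<close>)
  have congr_sym: "\<And>g k i j. k < p \<Longrightarrow> congr_act g (M k) i j = congr_act g (M k) j i"
  proof -
    fix g k i j assume k: "k < p"
    have "congr_act g (M k) i j = (\<Sum>b\<in>{b. g j b \<noteq> 0}. \<Sum>a\<in>{a. g i a \<noteq> 0}. g i a * M k a b * g j b)"
      unfolding congr_act_def by (rule sum.swap)
    also have "\<dots> = congr_act g (M k) j i"
      unfolding congr_act_def using symM[OF k] by (intro sum.cong refl) (simp add: mult_ac)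
    finally show "congr_act g (M k) i j = congr_act g (M k) j i" .
  qed
  have sub: "proj_block p l ` orbit p M \<subseteq> sym_l_tuples p l"
  proof
    fix Y assume "Y \<in> proj_block p l ` orbit p M"
    then obtain g where Y: "Y = proj_block p l (\<lambda>k. if k < p then congr_act g (M k) else (\<lambda>i j. 0))"
      by (auto simp: orbit_def)
    show "Y \<in> sym_l_tuples p l"
      unfolding sym_l_tuples_def Y proj_block_def using congr_sym by auto
  qed
  have rk: "\<And>nu j. \<exists>k<p. nu k \<noteq> 0 \<Longrightarrow> j < p * l \<Longrightarrow> enat ((2*p-1) * (j + (p - 1))) < mat_rank (qm nu)"
  proof -
    fix nu :: "nat \<Rightarrow> complex" and j assume nu: "\<exists>k<p. nu k \<noteq> 0" and j: "j < p * l"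
    have "enat ((2*p-1) * (j + (p - 1))) < enat (p * 2 ^ p * l)" using arith_bound[OF j] by simp
    also have "\<dots> \<le> tuple_rank p M" by (rule assms(2))
    also have "tuple_rank p M \<le> mat_rank (qm nu)"
      unfolding tuple_rank_def qm_def by (rule INF_lower) (use nu in auto)
    finally show "enat ((2*p-1) * (j + (p - 1))) < mat_rank (qm nu)" .
  qed
  show ?thesis unfolding zariski_dense_in_def
  proof (intro conjI ballI impI sub)
    fix f X assume f: "f \<in> poly_fun" and van: "\<forall>Y\<in>proj_block p l ` orbit p M. f Y = 0"
      and X: "X \<in> sym_l_tuples p l"
    obtain b where b: "\<And>i. i < l \<Longrightarrow> fin (b i)"
        "\<And>k i i'. k < p \<Longrightarrow> i < l \<Longrightarrow> i' < l \<Longrightarrow> bil (M k) (b i) (b i') = X k i i'"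
      using realize[OF rk X] by blast
    have "finite (\<Union>i<l. supp (b i))" using b(1) by auto
    then obtain N0 where N0: "(\<Union>i<l. supp (b i)) \<subseteq> {..<N0}" using finite_nat_iff_bounded by blast
    define n where "n = N0 + l"
    define e :: "nat \<Rightarrow> complex" where "e m = of_real (inverse (real (Suc m)))" for m
    have e0: "e m \<noteq> 0" for m unfolding e_def of_real_eq_0_iff by simp
    have "(\<lambda>m. of_real (inverse (real (Suc m))) :: complex) \<longlonglongrightarrow> of_real 0"
      by (rule tendsto_of_real[OF LIMSEQ_inverse_real_of_nat])
    then have elim: "e \<longlonglongrightarrow> 0" unfolding e_def by (simp only: of_real_0)
    define G where "G m = embed_gl n (gmat b N0 l (e m))" for m
    define Y where "Y m = proj_block p l (\<lambda>k. if k < p then congr_act (G m) (M k) else (\<lambda>i j. 0))" for m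
    have YS: "Y m \<in> proj_block p l ` orbit p M" for m
    proof -
      have "G m \<in> G_inf" unfolding G_def G_inf_def n_def using g_invertible[OF e0] by blast
      then show ?thesis unfolding Y_def orbit_def by blast
    qed
    have fY: "f (Y m) = 0" for m using van YS by blast
    define w where "w i = unitv (N0 + i)" for i
    have finw: "fin (w i)" for i by (simp add: w_def)
    have rowG: "\<And>m i. i < l \<Longrightarrow> G m i = b i + fscale (e m) (w i)"
      unfolding G_def n_def w_def using N0 by (intro row_embed) auto
    have conv: "(\<lambda>m. Y m k i j) \<longlonglongrightarrow> X k i j" for k i j
    proof (cases "k < p \<and> i < l \<and> j < l")
      case True
      then have k: "k < p" and i: "i < l" and j: "j < l" by auto
      define C1 where "C1 = bil (M k) (b i) (w j) + bil (M k) (w i) (b j)"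
      define C2 where "C2 = bil (M k) (w i) (w j)"
      have eq: "Y m k i j = X k i j + e m * C1 + e m * e m * C2" for m
      proof -
        have "Y m k i j = bil (M k) (G m i) (G m j)" using True by (simp add: Y_def proj_block_def congr_bil)
        also have "\<dots> = bil (M k) (b i + fscale (e m) (w i)) (b j + fscale (e m) (w j))"
          using rowG i j by simp
        also have "\<dots> = X k i j + e m * C1 + e m * e m * C2"
          using b(1)[OF i] b(1)[OF j] finw b(2)[OF k i j]
          by (simp add: bil_add1 bil_add2 bil_scale1 bil_scale2 C1_def C2_def algebra_simps)
        finally show ?thesis .
      qed
      have "(\<lambda>m. X k i j + e m * C1 + e m * e m * C2) \<longlonglongrightarrow> X k i j + 0 * C1 + 0 * 0 * C2"
        by (intro tendsto_intros elim)
      then show ?thesis by (simp add: eq)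
    next
      case False
      then have "Y m k i j = 0" for m by (auto simp: Y_def proj_block_def)
      moreover have "X k i j = 0" using X False by (auto simp: sym_l_tuples_def)
      ultimately show ?thesis by simp
    qed
    have "(\<lambda>m. f (Y m)) \<longlonglongrightarrow> f X" by (rule poly_tendsto[OF f conv])
    moreover have "(\<lambda>m. f (Y m)) \<longlonglongrightarrow> 0" by (simp add: fY)
    ultimately show "f X = 0" using LIMSEQ_unique by blast
  qed
qed


end
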